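(* There exist connected graphs $G$ and integers $k$ with $k-1\ge\chi(G)$ for which $\underline{\mathrm{lcs}}(G,k)<\underline{\mathrm{lcs}}(G,k-1)$; that is, $\underline{\mathrm{lcs}}(G,k)$ is not in general monotone non-decreasing in $k$.
   Context: All graphs are finite and simple. For a graph $G=(V,E)$ and an integer $k\ge\chi(G)$, a proper $k$-colouring is a map $c:V\to[k]$ with $c(u)\neq c(v)$ for every edge $uv$. A set $S\subseteq V$ is a determining set for $(G,c)$ if there is no proper $k$-colouring $c'\neq c$ with $c'(s)=c(s)$ for all $s\in S$; a critical set is an inclusion-minimal determining set. $\mathrm{lcs}(G,c)$ is the size of a largest critical set for $(G,c)$, and $\underline{\mathrm{lcs}}(G,k)$ is the minimum of $\mathrm{lcs}(G,c)$ over all proper $k$-colourings $c$ of $G$. *)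

theory Defs
  imports Main
begin

definition simple_graph :: "'a set \<Rightarrow> 'a set set \<Rightarrow> bool" where
  "simple_graph V E \<longleftrightarrow> finite V \<and> E \<subseteq> {{u, v} | u v. u \<in> V \<and> v \<in> V \<and> u \<noteq> v}"

definition graph_connected :: "'a set \<Rightarrow> 'a set set \<Rightarrow> bool" where
  "graph_connected V E \<longleftrightarrow> V \<noteq> {} \<and>
     (\<forall>u\<in>V. \<forall>v\<in>V. (u, v) \<in> {(x, y). {x, y} \<in> E}\<^sup>*)"

definition proper_colouring :: "'a set \<Rightarrow> 'a set set \<Rightarrow> nat \<Rightarrow> ('a \<Rightarrow> nat) \<Rightarrow> bool" where
  "proper_colouring V E k c \<longleftrightarrow>
     (\<forall>v\<in>V. c v \<in> {1..k}) \<and> (\<forall>u\<in>V. \<forall>v\<in>V. {u, v} \<in> E \<longrightarrow> c u \<noteq> c v)"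

definition chromatic_number :: "'a set \<Rightarrow> 'a set set \<Rightarrow> nat" where
  "chromatic_number V E = (LEAST k. \<exists>c. proper_colouring V E k c)"

text \<open>Two colourings are considered equal iff they agree on V.\<close>
definition determining_set :: "'a set \<Rightarrow> 'a set set \<Rightarrow> nat \<Rightarrow> ('a \<Rightarrow> nat) \<Rightarrow> 'a set \<Rightarrow> bool" where
  "determining_set V E k c S \<longleftrightarrow> S \<subseteq> V \<and>
     \<not> (\<exists>c'. proper_colouring V E k c' \<and> (\<forall>s\<in>S. c' s = c s) \<and> (\<exists>v\<in>V. c' v \<noteq> c v))"

definition critical_set :: "'a set \<Rightarrow> 'a set set \<Rightarrow> nat \<Rightarrow> ('a \<Rightarrow> nat) \<Rightarrow> 'a set \<Rightarrow> bool" where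
  "critical_set V E k c S \<longleftrightarrow> determining_set V E k c S \<and>
     (\<forall>T. T \<subset> S \<longrightarrow> \<not> determining_set V E k c T)"

definition lcs :: "'a set \<Rightarrow> 'a set set \<Rightarrow> nat \<Rightarrow> ('a \<Rightarrow> nat) \<Rightarrow> nat" where
  "lcs V E k c = Max {card S | S. critical_set V E k c S}"

definition lcs_min :: "'a set \<Rightarrow> 'a set set \<Rightarrow> nat \<Rightarrow> nat" where
  "lcs_min V E k = Min {lcs V E k c | c. proper_colouring V E k c}"

end

theory Submission
  imports Defs
begin

definition VV :: "nat set" where "VV = {0,1,2,3,4,5,6}"
definition EE :: "nat set set" where
  "EE = {{0,1},{0,2},{0,3},{0,4},{0,5},{0,6},{1,2},{1,3},{1,4},{1,5},{2,3},{2,4},{3,4}}"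

lemma pc_iff: "proper_colouring VV EE k c \<longleftrightarrow>
  (c 0 \<in> {1..k} \<and> c 1 \<in> {1..k} \<and> c 2 \<in> {1..k} \<and> c 3 \<in> {1..k} \<and> c 4 \<in> {1..k} \<and>
   c 5 \<in> {1..k} \<and> c 6 \<in> {1..k}) \<and>
  c 0 \<noteq> c 1 \<and> c 0 \<noteq> c 2 \<and> c 0 \<noteq> c 3 \<and> c 0 \<noteq> c 4 \<and> c 0 \<noteq> c 5 \<and> c 0 \<noteq> c 6 \<and>
  c 1 \<noteq> c 2 \<and> c 1 \<noteq> c 3 \<and> c 1 \<noteq> c 4 \<and> c 1 \<noteq> c 5 \<and>
  c 2 \<noteq> c 3 \<and> c 2 \<noteq> c 4 \<and> c 3 \<noteq> c 4"
  unfolding proper_colouring_def VV_def EE_def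
  by (simp add: doubleton_eq_iff) (safe; simp_all add: eq_commute)

lemma det_mono: "determining_set V E k c T \<Longrightarrow> T \<subseteq> S \<Longrightarrow> S \<subseteq> V \<Longrightarrow> determining_set V E k c S"
  unfolding determining_set_def by blast

lemma crit_exists: assumes "finite V" shows "\<exists>S. critical_set V E k c S"
proof -
  have "determining_set V E k c V" unfolding determining_set_def by blast
  then obtain S where S: "determining_set V E k c S"
    "\<forall>T. determining_set V E k c T \<longrightarrow> card S \<le> card T"
    using ex_has_least_nat[where P="determining_set V E k c" and m=card] by blast
  have "\<not> determining_set V E k c T" if "T \<subset> S" for T
  proof -
    have "S \<subseteq> V" using S(1) unfolding determining_set_def by blast
    then have "finite S" using assms finite_subset by blast
    then have "card T < card S" using that psubset_card_mono by blast
    then show ?thesis using S(2) by force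
  qed
  then show ?thesis using S(1) unfolding critical_set_def by blast
qed

lemma cards_fin: assumes "finite V" shows "finite {card S | S. critical_set V E k c S}"
proof -
  have "{card S | S. critical_set V E k c S} \<subseteq> card ` Pow V"
    unfolding critical_set_def determining_set_def by blast
  then show ?thesis using assms finite_subset by blast
qed

lemma lcs_ge: "finite V \<Longrightarrow> critical_set V E k c S \<Longrightarrow> card S \<le> lcs V E k c"
  unfolding lcs_def by (rule Max_ge) (auto intro: cards_fin)

lemma lcs_upper: assumes "finite V" "\<And>S. critical_set V E k c S \<Longrightarrow> card S \<le> m"
  shows "lcs V E k c \<le> m"
  unfolding lcs_def
  using crit_exists[OF assms(1)] cards_fin[OF assms(1)] assms(2)
  by (intro Max.boundedI) auto

lemma lcs_le_card: assumes "finite V" shows "lcs V E k c \<le> card V"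
  using assms
  by (intro lcs_upper) (auto simp: critical_set_def determining_set_def intro: card_mono)

lemma lcsmin_fin: assumes "finite V" shows "finite {lcs V E k c | c. proper_colouring V E k c}"
proof -
  have "{lcs V E k c | c. proper_colouring V E k c} \<subseteq> {..card V}"
    using lcs_le_card[OF assms] by auto
  then show ?thesis using finite_subset by blast
qed

lemma lcsmin_le: "finite V \<Longrightarrow> proper_colouring V E k c \<Longrightarrow> lcs_min V E k \<le> lcs V E k c"
  unfolding lcs_min_def by (rule Min_le) (auto intro: lcsmin_fin)

lemma lcsmin_ge: assumes "finite V" "proper_colouring V E k c0"
  "\<And>c. proper_colouring V E k c \<Longrightarrow> m \<le> lcs V E k c"
  shows "m \<le> lcs_min V E k"
  unfolding lcs_min_def using lcsmin_fin[OF assms(1)] assms(2,3)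
  by (intro Min.boundedI) auto


lemma finVV: "finite VV" unfolding VV_def by simp

lemma miss:
  fixes a b d e p q :: nat
  assumes "a \<in> {1..5}" "b \<in> {1..5}" "d \<in> {1..5}" "e \<in> {1..5}" "p \<in> {1..5}" "q \<in> {1..5}"
    "a \<noteq> b" "a \<noteq> d" "a \<noteq> e" "a \<noteq> p" "b \<noteq> d" "b \<noteq> e" "b \<noteq> p" "d \<noteq> e" "d \<noteq> p" "e \<noteq> p"
    "q \<noteq> a" "q \<noteq> b" "q \<noteq> d" "q \<noteq> e"
  shows "q = p"
proof -
  have "card {a,b,d,e,p} = 5" using assms by simp
  moreover have "{a,b,d,e,p} \<subseteq> {1..5}" using assms by simp
  ultimately have "{a,b,d,e,p} = {1..5}" by (simp add: card_subset_eq)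
  then show ?thesis using assms by blast
qed

lemma avoid3: "\<exists>z::nat. z \<in> {1..5} \<and> z \<noteq> a \<and> z \<noteq> b \<and> z \<noteq> d"
proof -
  have "\<not> {1,2,3,4::nat} \<subseteq> {a,b,d}"
  proof
    assume "{1,2,3,4::nat} \<subseteq> {a,b,d}"
    then have "card {1,2,3,4::nat} \<le> card {a,b,d}" by (intro card_mono) auto
    moreover have "card {a,b,d} \<le> 3" by (rule order_trans[OF card_insert_le_m1]) (auto simp: card_insert_le_m1)
    ultimately show False by simp
  qed
  then obtain z where "z \<in> {1,2,3,4::nat}" "z \<notin> {a,b,d}" by blast
  then show ?thesis by (intro exI[of _ z]) auto
qed

definition c0 :: "nat \<Rightarrow> nat" where
  "c0 = (\<lambda>v. 0)(0:=1, 1:=2, 2:=3, 3:=4, 4:=5, 5:=6, 6:=2)"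

lemma c0_pc: "proper_colouring VV EE 6 c0"
  unfolding pc_iff c0_def by simp

lemma c0_notdet: "v \<in> {2,3,4,5,6} \<Longrightarrow> \<not> determining_set VV EE 6 c0 (VV - {v})"
  unfolding determining_set_def
  apply (elim insertE; simp)
  subgoal apply (rule exI[where x="c0(2:=6)"]) unfolding pc_iff by (simp add: c0_def VV_def)
  subgoal apply (rule exI[where x="c0(3:=6)"]) unfolding pc_iff by (simp add: c0_def VV_def)
  subgoal apply (rule exI[where x="c0(4:=6)"]) unfolding pc_iff by (simp add: c0_def VV_def)
  subgoal apply (rule exI[where x="c0(5:=3)"]) unfolding pc_iff by (simp add: c0_def VV_def)
  subgoal apply (rule exI[where x="c0(6:=3)"]) unfolding pc_iff by (simp add: c0_def VV_def)
  done

lemma c0_det: "determining_set VV EE 6 c0 {2,3,4,5,6}"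
  unfolding determining_set_def
proof (intro conjI notI)
  show "{2, 3, 4, 5, 6} \<subseteq> VV" by (simp add: VV_def)
next
  assume "\<exists>c'. proper_colouring VV EE 6 c' \<and> (\<forall>s\<in>{2, 3, 4, 5, 6}. c' s = c0 s) \<and> (\<exists>v\<in>VV. c' v \<noteq> c0 v)"
  then obtain c' where h: "proper_colouring VV EE 6 c'" "\<forall>s\<in>{2, 3, 4, 5, 6}. c' s = c0 s"
    "\<exists>v\<in>VV. c' v \<noteq> c0 v" by blast
  have v: "c' 2 = 3" "c' 3 = 4" "c' 4 = 5" "c' 5 = 6" "c' 6 = 2" using h(2) by (auto simp: c0_def)
  have "c' 0 = 1" using h(1) v unfolding pc_iff by simp presburger
  moreover have "c' 1 = 2" using h(1) v \<open>c' 0 = 1\<close> unfolding pc_iff by simp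
  ultimately show False using h(3) v by (auto simp: VV_def c0_def)
qed

lemma c0_crit: assumes "critical_set VV EE 6 c0 S" shows "card S \<le> 5"
proof -
  have d: "determining_set VV EE 6 c0 S" using assms critical_set_def by blast
  have sub: "{2,3,4,5,6} \<subseteq> S"
  proof
    fix v assume v: "v \<in> {2,3,4,5,6::nat}"
    show "v \<in> S"
    proof (rule ccontr)
      assume "v \<notin> S"
      then have "S \<subseteq> VV - {v}" using d unfolding determining_set_def by blast
      then have "determining_set VV EE 6 c0 (VV - {v})" using det_mono[OF d] by blast
      then show False using c0_notdet[OF v] by blast
    qed
  qed
  have "S = {2,3,4,5,6}"
  proof (rule ccontr)
    assume "S \<noteq> {2,3,4,5,6}"
    then have "{2,3,4,5,6} \<subset> S" using sub by blast
    then show False using assms c0_det unfolding critical_set_def by blast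
  qed
  then show ?thesis by simp
qed

lemma lcs6: "lcs_min VV EE 6 \<le> 5"
proof -
  have "lcs VV EE 6 c0 \<le> 5" by (rule lcs_upper[OF finVV c0_crit])
  then show ?thesis using lcsmin_le[OF finVV c0_pc] by linarith
qed


lemma low_crit:
  assumes pc: "proper_colouring VV EE 5 c" and x: "x \<in> {2,3,4}" and cx: "c x \<noteq> c 5" "c x \<noteq> c 6"
  shows "critical_set VV EE 5 c (VV - {x})"
proof -
  note P = pc[unfolded pc_iff]
  have det: "determining_set VV EE 5 c (VV - {x})"
    unfolding determining_set_def
  proof (intro conjI notI)
    show "VV - {x} \<subseteq> VV" by blast
  next
    assume "\<exists>c'. proper_colouring VV EE 5 c' \<and> (\<forall>s\<in>VV - {x}. c' s = c s) \<and> (\<exists>v\<in>VV. c' v \<noteq> c v)"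
    then obtain c' where h: "proper_colouring VV EE 5 c'" "\<forall>s\<in>VV - {x}. c' s = c s"
      "\<exists>v\<in>VV. c' v \<noteq> c v" by blast
    note Q = h(1)[unfolded pc_iff]
    have ag: "\<And>s. s \<in> VV \<Longrightarrow> s \<noteq> x \<Longrightarrow> c' s = c s" using h(2) by blast
    have "x = 2 \<or> x = 3 \<or> x = 4" using x by auto
    then have "c' x = c x"
    proof (elim disjE)
      assume "x = 2"
      then show ?thesis using ag[of 0] ag[of 1] ag[of 3] ag[of 4] P Q
        by (intro miss[of "c 0" "c 1" "c 3" "c 4"]) (auto simp: VV_def)
    next
      assume "x = 3"
      then show ?thesis using ag[of 0] ag[of 1] ag[of 2] ag[of 4] P Q
        by (intro miss[of "c 0" "c 1" "c 2" "c 4"]) (auto simp: VV_def)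
    next
      assume "x = 4"
      then show ?thesis using ag[of 0] ag[of 1] ag[of 2] ag[of 3] P Q
        by (intro miss[of "c 0" "c 1" "c 2" "c 3"]) (auto simp: VV_def)
    qed
    then show False using h(3) ag by metis
  qed
  have nd: "\<exists>c'. proper_colouring VV EE 5 c' \<and> (\<forall>s\<in>VV-{x,v}. c' s = c s) \<and> c' v \<noteq> c v"
    if v: "v \<in> VV - {x}" for v
  proof -
    have "v \<in> {0,1,2,3,4} \<or> v = 5 \<or> v = 6" using v by (auto simp: VV_def)
    then show ?thesis
    proof (elim disjE)
      assume v5: "v = 5"
      obtain z where z: "z \<in> {1..5}" "z \<noteq> c 0" "z \<noteq> c 1" "z \<noteq> c 5" using avoid3 by blast
      show ?thesis using z P v5 x
        by (intro exI[of _ "c(5:=z)"]) (auto simp: pc_iff)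
    next
      assume v6: "v = 6"
      obtain z where z: "z \<in> {1..5}" "z \<noteq> c 0" "z \<noteq> c 6" "z \<noteq> c 6" using avoid3 by blast
      show ?thesis using z P v6 x
        by (intro exI[of _ "c(6:=z)"]) (auto simp: pc_iff)
    next
      assume vq: "v \<in> {0,1,2,3,4}"
      have "v \<noteq> x" using v by blast
      have "proper_colouring VV EE 5 (c(x := c v, v := c x)) \<and> c x \<noteq> c v"
        using x vq \<open>v \<noteq> x\<close> P cx
        by (elim insertE; simp add: pc_iff; metis)
      then show ?thesis by (intro exI[of _ "c(x := c v, v := c x)"]) auto
    qed
  qed
  have "\<not> determining_set VV EE 5 c T" if T: "T \<subset> VV - {x}" for T
  proof -
    obtain v where v: "v \<in> VV - {x}" "v \<notin> T" using T by blast
    obtain c' where c': "proper_colouring VV EE 5 c'" "\<forall>s\<in>VV-{x,v}. c' s = c s" "c' v \<noteq> c v"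
      using nd[OF v(1)] by blast
    have "\<forall>s\<in>T. c' s = c s" using c'(2) T v by blast
    then show ?thesis unfolding determining_set_def using c' v by blast
  qed
  then show ?thesis using det unfolding critical_set_def by blast
qed

lemma low: assumes pc: "proper_colouring VV EE 5 c" shows "6 \<le> lcs VV EE 5 c"
proof -
  note P = pc[unfolded pc_iff]
  obtain x where x: "x \<in> {2,3,4}" "c x \<noteq> c 5" "c x \<noteq> c 6"
  proof -
    have "\<exists>x\<in>{2,3,4::nat}. c x \<noteq> c 5 \<and> c x \<noteq> c 6" using P by auto
    then show ?thesis using that by blast
  qed
  have "card (VV - {x}) = 6" using x by (auto simp: VV_def)
  then show ?thesis using lcs_ge[OF finVV low_crit[OF pc x]] by simp
qed

definition c5 :: "nat \<Rightarrow> nat" where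
  "c5 = (\<lambda>v. 0)(0:=1, 1:=2, 2:=3, 3:=4, 4:=5, 5:=3, 6:=2)"

lemma c5_pc: "proper_colouring VV EE 5 c5"
  unfolding pc_iff c5_def by simp

lemma lcs5: "6 \<le> lcs_min VV EE 5"
  by (rule lcsmin_ge[OF finVV c5_pc low])

lemma edge_in: "u \<in> V \<Longrightarrow> v \<in> V \<Longrightarrow> u \<noteq> v \<Longrightarrow> {u,v} \<in> {{u, v} | u v. u \<in> V \<and> v \<in> V \<and> u \<noteq> v}"
  by blast

lemma simpleVV: "simple_graph VV EE"
  unfolding simple_graph_def EE_def
  apply (simp only: insert_subset empty_subsetI simp_thms)
  apply (intro conjI edge_in)
  apply (simp_all add: VV_def)
  done

lemma connVV: "graph_connected VV EE"
proof -
  let ?R = "{(x, y). {x, y} \<in> EE}"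
  have e: "{0, u} \<in> EE" "{u, 0} \<in> EE" if "u \<in> VV" "u \<noteq> 0" for u
    using that unfolding VV_def EE_def by (auto simp: doubleton_eq_iff)
  have a: "(u, 0) \<in> ?R\<^sup>*" "(0, u) \<in> ?R\<^sup>*" if "u \<in> VV" for u
  proof -
    have "u = 0 \<or> ((u, 0) \<in> ?R \<and> (0, u) \<in> ?R)" using e[OF that] by auto
    then show "(u, 0) \<in> ?R\<^sup>*" "(0, u) \<in> ?R\<^sup>*" by auto
  qed
  show ?thesis unfolding graph_connected_def
  proof (intro conjI ballI)
    show "VV \<noteq> {}" by (simp add: VV_def)
  next
    fix u v assume "u \<in> VV" "v \<in> VV"
    then show "(u, v) \<in> ?R\<^sup>*" using a by (meson rtrancl_trans)
  qed
qed

lemma chiVV: "chromatic_number VV EE \<le> 5"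
  unfolding chromatic_number_def using c5_pc by (intro Least_le) blast

theorem theorem7:
  shows "\<exists>(V :: nat set) (E :: nat set set) (k :: nat).
           simple_graph V E \<and> graph_connected V E \<and>
           chromatic_number V E + 1 \<le> k \<and>
           lcs_min V E k < lcs_min V E (k - 1)"
  apply (rule exI[of _ VV], rule exI[of _ EE], rule exI[of _ 6])
  using simpleVV connVV chiVV lcs5 lcs6 by simp

end
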